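(* Let $(X,\sigma,\tau)$ be a separable, chronologically dense Lorentzian metric space satisfying the S-property. Then $\overline{\tau}:\overline{X}\times\overline{X}\to[0,\infty]$ is lower semicontinuous with respect to the chronological topology $\sigma_{chr}$ of $\overline X$ (product topology on $\overline X\times\overline X$).
   Context: A Lorentzian metric space $(X,\sigma,\tau)$ is a topological space with $\tau:X\times X\to[0,\infty]$ lower semicontinuous and satisfying $\tau(x,z)\geq\tau(x,y)+\tau(y,z)$ whenever $\tau(x,y),\tau(y,z)>0$. Write $x\ll y$ iff $\tau(x,y)>0$, $I^+(x)=\{y:x\ll y\}$, $I^-(x)=\{y:y\ll x\}$, $I^\pm[A]=\bigcup_{a\in A}I^\pm(a)$. Future (resp. past) chain: $x_n\ll x_{n+1}$ (resp. $x_{n+1}\ll x_n$) for all $n$. Separable: there is a countable $S$ with $x\ll y\Rightarrow\exists s\in S$, $x\ll s\ll y$. Chronologically dense: every $x$ with $I^-(x)\neq\emptyset$ (resp. $I^+(x)\neq\emptyset$) is the $\sigma$-limit of a future (resp. past) chain. Past set: $P=I^-[P]$; $\downarrow S=I^-[\{p:p\ll q\ \forall q\in S\}]$; IP: past set not the union of two proper past subsets; PIP: IP of the form $I^-(p)$; future sets, $\uparrow S$, IF, PIF dually. For nonempty IP $P$ and IF $F$, $P\sim_S F$ iff $P$ is a maximal IP in $\downarrow F$ and $F$ a maximal IF in $\uparrow P$; $P\sim_S\emptyset$ (resp. $\emptyset\sim_S F$) if the nonempty $P$ (resp. $F$) is S-related to no nonempty IF (resp. IP). S-property: for every $x$, $I^-(x)\sim_S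 I^+(x)$, and no PIF other than $I^+(x)$ (resp. PIP other than $I^-(x)$) is S-related to $I^-(x)$ (resp. $I^+(x)$). c-completion $\overline X=\{(P,F):P\sim_S F\}$. For a sequence $\{(P_n,F_n)\}$ in $\overline X$, $(P,F)\in L(\{(P_n,F_n)\})$ iff ($P\neq\emptyset\Rightarrow P\subset LI(P_n)$ and $P$ is a maximal IP in $LS(P_n)$) and ($F\neq\emptyset\Rightarrow F\subset LI(F_n)$ and $F$ is a maximal IF in $LS(F_n)$), where $LI(A_n)=\bigcup_n\bigcap_{k\ge n}A_k$, $LS(A_n)=\bigcap_n\bigcup_{k\ge n}A_k$. $\sigma_{chr}$: $C\subset\overline X$ is closed iff $L(s)\subset C$ for every sequence $s$ in $C$. $\overline\tau((P,F),(P',F'))=0$ if $F=\emptyset$ or $P'=\emptyset$, and otherwise $\lim_n\tau(q_n,p'_n)$ for any past chain $\{q_n\}$ with $I^+[\{q_n\}]=F$ and future chain $\{p'_n\}$ with $I^-[\{p'_n\}]=P'$ (well defined). *)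

theory Defs
  imports "HOL-Analysis.Analysis"
begin

definition lsc_on :: "'b topology \<Rightarrow> ('b \<Rightarrow> ennreal) \<Rightarrow> bool" where
  "lsc_on T f \<longleftrightarrow> (\<forall>t. openin T {z \<in> topspace T. t < f z})"

definition lorentzian_metric_space :: "'a topology \<Rightarrow> ('a \<Rightarrow> 'a \<Rightarrow> ennreal) \<Rightarrow> bool" where
  "lorentzian_metric_space \<sigma> \<tau> \<longleftrightarrow>
     topspace \<sigma> = UNIV \<and>
     lsc_on (prod_topology \<sigma> \<sigma>) (\<lambda>(x, y). \<tau> x y) \<and>
     (\<forall>x y z. \<tau> x y > 0 \<and> \<tau> y z > 0 \<longrightarrow> \<tau> x z \<ge> \<tau> x y + \<tau> y z)"

definition chr :: "('a \<Rightarrow> 'a \<Rightarrow> ennreal) \<Rightarrow> 'a \<Rightarrow> 'a \<Rightarrow> bool" where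
  "chr \<tau> x y \<longleftrightarrow> \<tau> x y > 0"

definition Ifut :: "('a \<Rightarrow> 'a \<Rightarrow> ennreal) \<Rightarrow> 'a \<Rightarrow> 'a set" where
  "Ifut \<tau> x = {y. chr \<tau> x y}"

definition Ipast :: "('a \<Rightarrow> 'a \<Rightarrow> ennreal) \<Rightarrow> 'a \<Rightarrow> 'a set" where
  "Ipast \<tau> x = {y. chr \<tau> y x}"

definition IfutS :: "('a \<Rightarrow> 'a \<Rightarrow> ennreal) \<Rightarrow> 'a set \<Rightarrow> 'a set" where
  "IfutS \<tau> A = (\<Union>a\<in>A. Ifut \<tau> a)"

definition IpastS :: "('a \<Rightarrow> 'a \<Rightarrow> ennreal) \<Rightarrow> 'a set \<Rightarrow> 'a set" where
  "IpastS \<tau> A = (\<Union>a\<in>A. Ipast \<tau> a)"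

definition future_chain :: "('a \<Rightarrow> 'a \<Rightarrow> ennreal) \<Rightarrow> (nat \<Rightarrow> 'a) \<Rightarrow> bool" where
  "future_chain \<tau> x \<longleftrightarrow> (\<forall>n. chr \<tau> (x n) (x (Suc n)))"

definition past_chain :: "('a \<Rightarrow> 'a \<Rightarrow> ennreal) \<Rightarrow> (nat \<Rightarrow> 'a) \<Rightarrow> bool" where
  "past_chain \<tau> x \<longleftrightarrow> (\<forall>n. chr \<tau> (x (Suc n)) (x n))"

definition separable_lms :: "('a \<Rightarrow> 'a \<Rightarrow> ennreal) \<Rightarrow> bool" where
  "separable_lms \<tau> \<longleftrightarrow>
     (\<exists>S. countable S \<and> (\<forall>x y. chr \<tau> x y \<longrightarrow> (\<exists>s\<in>S. chr \<tau> x s \<and> chr \<tau> s y)))"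

definition chronologically_dense :: "'a topology \<Rightarrow> ('a \<Rightarrow> 'a \<Rightarrow> ennreal) \<Rightarrow> bool" where
  "chronologically_dense \<sigma> \<tau> \<longleftrightarrow>
     (\<forall>x. Ipast \<tau> x \<noteq> {} \<longrightarrow>
        (\<exists>s. future_chain \<tau> s \<and> limitin \<sigma> s x sequentially)) \<and>
     (\<forall>x. Ifut \<tau> x \<noteq> {} \<longrightarrow>
        (\<exists>s. past_chain \<tau> s \<and> limitin \<sigma> s x sequentially))"

definition past_set :: "('a \<Rightarrow> 'a \<Rightarrow> ennreal) \<Rightarrow> 'a set \<Rightarrow> bool" where
  "past_set \<tau> P \<longleftrightarrow> P = IpastS \<tau> P"

definition future_set :: "('a \<Rightarrow> 'a \<Rightarrow> ennreal) \<Rightarrow> 'a set \<Rightarrow> bool" where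
  "future_set \<tau> F \<longleftrightarrow> F = IfutS \<tau> F"

definition IP :: "('a \<Rightarrow> 'a \<Rightarrow> ennreal) \<Rightarrow> 'a set \<Rightarrow> bool" where
  "IP \<tau> P \<longleftrightarrow> past_set \<tau> P \<and> P \<noteq> {} \<and>
     \<not> (\<exists>A B. past_set \<tau> A \<and> past_set \<tau> B \<and> A \<subset> P \<and> B \<subset> P \<and> P = A \<union> B)"

definition IF :: "('a \<Rightarrow> 'a \<Rightarrow> ennreal) \<Rightarrow> 'a set \<Rightarrow> bool" where
  "IF \<tau> F \<longleftrightarrow> future_set \<tau> F \<and> F \<noteq> {} \<and>
     \<not> (\<exists>A B. future_set \<tau> A \<and> future_set \<tau> B \<and> A \<subset> F \<and> B \<subset> F \<and> F = A \<union> B)"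

definition PIP :: "('a \<Rightarrow> 'a \<Rightarrow> ennreal) \<Rightarrow> 'a set \<Rightarrow> bool" where
  "PIP \<tau> P \<longleftrightarrow> IP \<tau> P \<and> (\<exists>p. P = Ipast \<tau> p)"

definition PIF :: "('a \<Rightarrow> 'a \<Rightarrow> ennreal) \<Rightarrow> 'a set \<Rightarrow> bool" where
  "PIF \<tau> F \<longleftrightarrow> IF \<tau> F \<and> (\<exists>p. F = Ifut \<tau> p)"

definition down :: "('a \<Rightarrow> 'a \<Rightarrow> ennreal) \<Rightarrow> 'a set \<Rightarrow> 'a set" where
  "down \<tau> S = IpastS \<tau> {p. \<forall>q\<in>S. chr \<tau> p q}"

definition up :: "('a \<Rightarrow> 'a \<Rightarrow> ennreal) \<Rightarrow> 'a set \<Rightarrow> 'a set" where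
  "up \<tau> S = IfutS \<tau> {p. \<forall>q\<in>S. chr \<tau> q p}"

definition maximal_IP_in :: "('a \<Rightarrow> 'a \<Rightarrow> ennreal) \<Rightarrow> 'a set \<Rightarrow> 'a set \<Rightarrow> bool" where
  "maximal_IP_in \<tau> P A \<longleftrightarrow> IP \<tau> P \<and> P \<subseteq> A \<and>
     (\<forall>P'. IP \<tau> P' \<and> P \<subseteq> P' \<and> P' \<subseteq> A \<longrightarrow> P' = P)"

definition maximal_IF_in :: "('a \<Rightarrow> 'a \<Rightarrow> ennreal) \<Rightarrow> 'a set \<Rightarrow> 'a set \<Rightarrow> bool" where
  "maximal_IF_in \<tau> F A \<longleftrightarrow> IF \<tau> F \<and> F \<subseteq> A \<and>
     (\<forall>F'. IF \<tau> F' \<and> F \<subseteq> F' \<and> F' \<subseteq> A \<longrightarrow> F' = F)"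

definition S_rel_ne :: "('a \<Rightarrow> 'a \<Rightarrow> ennreal) \<Rightarrow> 'a set \<Rightarrow> 'a set \<Rightarrow> bool" where
  "S_rel_ne \<tau> P F \<longleftrightarrow> P \<noteq> {} \<and> F \<noteq> {} \<and> IP \<tau> P \<and> IF \<tau> F \<and>
     maximal_IP_in \<tau> P (down \<tau> F) \<and> maximal_IF_in \<tau> F (up \<tau> P)"

definition S_rel :: "('a \<Rightarrow> 'a \<Rightarrow> ennreal) \<Rightarrow> 'a set \<Rightarrow> 'a set \<Rightarrow> bool" where
  "S_rel \<tau> P F \<longleftrightarrow>
     S_rel_ne \<tau> P F \<or>
     (P \<noteq> {} \<and> F = {} \<and> IP \<tau> P \<and> \<not> (\<exists>F'. S_rel_ne \<tau> P F')) \<or>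
     (P = {} \<and> F \<noteq> {} \<and> IF \<tau> F \<and> \<not> (\<exists>P'. S_rel_ne \<tau> P' F))"

definition S_property :: "('a \<Rightarrow> 'a \<Rightarrow> ennreal) \<Rightarrow> bool" where
  "S_property \<tau> \<longleftrightarrow>
     (\<forall>x. S_rel \<tau> (Ipast \<tau> x) (Ifut \<tau> x) \<and>
          (\<forall>F. PIF \<tau> F \<and> S_rel \<tau> (Ipast \<tau> x) F \<longrightarrow> F = Ifut \<tau> x) \<and>
          (\<forall>P. PIP \<tau> P \<and> S_rel \<tau> P (Ifut \<tau> x) \<longrightarrow> P = Ipast \<tau> x))"

definition c_completion :: "('a \<Rightarrow> 'a \<Rightarrow> ennreal) \<Rightarrow> ('a set \<times> 'a set) set" where
  "c_completion \<tau> = {(P, F). S_rel \<tau> P F}"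

definition LI :: "(nat \<Rightarrow> 'a set) \<Rightarrow> 'a set" where
  "LI A = (\<Union>n. \<Inter>k\<in>{n..}. A k)"

definition LS :: "(nat \<Rightarrow> 'a set) \<Rightarrow> 'a set" where
  "LS A = (\<Inter>n. \<Union>k\<in>{n..}. A k)"

definition Lchr :: "('a \<Rightarrow> 'a \<Rightarrow> ennreal) \<Rightarrow> (nat \<Rightarrow> 'a set \<times> 'a set) \<Rightarrow> ('a set \<times> 'a set) set" where
  "Lchr \<tau> s = {(P, F) \<in> c_completion \<tau>.
      (P \<noteq> {} \<longrightarrow> P \<subseteq> LI (\<lambda>n. fst (s n)) \<and> maximal_IP_in \<tau> P (LS (\<lambda>n. fst (s n)))) \<and>
      (F \<noteq> {} \<longrightarrow> F \<subseteq> LI (\<lambda>n. snd (s n)) \<and> maximal_IF_in \<tau> F (LS (\<lambda>n. snd (s n))))}"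

definition chr_closed :: "('a \<Rightarrow> 'a \<Rightarrow> ennreal) \<Rightarrow> ('a set \<times> 'a set) set \<Rightarrow> bool" where
  "chr_closed \<tau> C \<longleftrightarrow> C \<subseteq> c_completion \<tau> \<and> (\<forall>s. (\<forall>n. s n \<in> C) \<longrightarrow> Lchr \<tau> s \<subseteq> C)"

definition sigma_chr :: "('a \<Rightarrow> 'a \<Rightarrow> ennreal) \<Rightarrow> ('a set \<times> 'a set) topology" where
  "sigma_chr \<tau> = topology (\<lambda>U. U \<subseteq> c_completion \<tau> \<and> chr_closed \<tau> (c_completion \<tau> - U))"

definition tau_bar :: "('a \<Rightarrow> 'a \<Rightarrow> ennreal) \<Rightarrow> ('a set \<times> 'a set) \<Rightarrow> ('a set \<times> 'a set) \<Rightarrow> ennreal" where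
  "tau_bar \<tau> PF PF' =
     (let F = snd PF; P' = fst PF' in
      if F = {} \<or> P' = {} then 0
      else (let q = (SOME q. past_chain \<tau> q \<and> IfutS \<tau> (range q) = F);
                p = (SOME p. future_chain \<tau> p \<and> IpastS \<tau> (range p) = P')
            in lim (\<lambda>n. \<tau> (q n) (p n))))"

end

theory Submission
  imports Defs "HOL-Library.Infinite_Set"
begin

section \<open>Subsequences and the chronological topology\<close>

lemma LI_subseq: "strict_mono r \<Longrightarrow> LI A \<subseteq> LI (A \<circ> r)"
proof
  fix x assume r: "strict_mono r" and x: "x \<in> LI A"
  then obtain m where m: "\<forall>k\<ge>m. x \<in> A k" unfolding LI_def by auto
  have "\<forall>k\<ge>m. x \<in> A (r k)"
  proof (intro allI impI)
    fix k assume "m \<le> k"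
    moreover have "k \<le> r k" using seq_suble[OF r] by blast
    ultimately show "x \<in> A (r k)" using m by simp
  qed
  then show "x \<in> LI (A \<circ> r)" unfolding LI_def by auto
qed

lemma LS_subseq: "strict_mono r \<Longrightarrow> LS (A \<circ> r) \<subseteq> LS A"
proof
  fix x assume r: "strict_mono r" and x: "x \<in> LS (A \<circ> r)"
  show "x \<in> LS A" unfolding LS_def
  proof
    fix n
    obtain k where "k \<ge> n" "x \<in> A (r k)" using x unfolding LS_def by auto
    moreover have "r k \<ge> k" using seq_suble[OF r] by blast
    ultimately show "x \<in> (\<Union>k\<in>{n..}. A k)" by auto
  qed
qed

lemma LI_LS: "LI A \<subseteq> LS A"
proof
  fix x assume "x \<in> LI A"
  then obtain m where m: "\<forall>k\<ge>m. x \<in> A k" unfolding LI_def by auto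
  show "x \<in> LS A" unfolding LS_def
  proof
    fix n
    have "x \<in> A (max n m)" using m by simp
    then show "x \<in> (\<Union>k\<in>{n..}. A k)" by (intro UN_I[of "max n m"]) auto
  qed
qed

lemma maxIP_subseq:
  assumes r: "strict_mono r" and P: "P \<subseteq> LI A" and m: "maximal_IP_in \<tau> P (LS A)"
  shows "P \<subseteq> LI (A \<circ> r) \<and> maximal_IP_in \<tau> P (LS (A \<circ> r))"
proof -
  have 1: "P \<subseteq> LI (A \<circ> r)" using P LI_subseq[OF r] by (rule order_trans)
  have 2: "P \<subseteq> LS (A \<circ> r)" using 1 LI_LS by (rule order_trans)
  have 3: "LS (A \<circ> r) \<subseteq> LS A" using LS_subseq[OF r] .
  have "IP \<tau> P" using m unfolding maximal_IP_in_def by simp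
  moreover have "\<forall>P'. IP \<tau> P' \<and> P \<subseteq> P' \<and> P' \<subseteq> LS (A \<circ> r) \<longrightarrow> P' = P"
  proof (intro allI impI)
    fix P' assume h: "IP \<tau> P' \<and> P \<subseteq> P' \<and> P' \<subseteq> LS (A \<circ> r)"
    then have "P' \<subseteq> LS A" using 3 by (meson order_trans)
    then show "P' = P" using h m unfolding maximal_IP_in_def by simp
  qed
  ultimately show ?thesis using 1 2 unfolding maximal_IP_in_def by simp
qed

lemma maxIF_subseq:
  assumes r: "strict_mono r" and P: "P \<subseteq> LI A" and m: "maximal_IF_in \<tau> P (LS A)"
  shows "P \<subseteq> LI (A \<circ> r) \<and> maximal_IF_in \<tau> P (LS (A \<circ> r))"
proof -
  have 1: "P \<subseteq> LI (A \<circ> r)" using P LI_subseq[OF r] by (rule order_trans)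
  have 2: "P \<subseteq> LS (A \<circ> r)" using 1 LI_LS by (rule order_trans)
  have 3: "LS (A \<circ> r) \<subseteq> LS A" using LS_subseq[OF r] .
  have "IF \<tau> P" using m unfolding maximal_IF_in_def by simp
  moreover have "\<forall>P'. IF \<tau> P' \<and> P \<subseteq> P' \<and> P' \<subseteq> LS (A \<circ> r) \<longrightarrow> P' = P"
  proof (intro allI impI)
    fix P' assume h: "IF \<tau> P' \<and> P \<subseteq> P' \<and> P' \<subseteq> LS (A \<circ> r)"
    then have "P' \<subseteq> LS A" using 3 by (meson order_trans)
    then show "P' = P" using h m unfolding maximal_IF_in_def by simp
  qed
  ultimately show ?thesis using 1 2 unfolding maximal_IF_in_def by simp
qed

lemma Lchr_subseq:
  assumes r: "strict_mono r"
  shows "Lchr \<tau> s \<subseteq> Lchr \<tau> (s \<circ> r)"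
proof
  fix z assume z: "z \<in> Lchr \<tau> s"
  obtain P F where zPF: "z = (P, F)" by (cases z)
  have e1: "(\<lambda>n. fst ((s \<circ> r) n)) = (\<lambda>n. fst (s n)) \<circ> r" by auto
  have e2: "(\<lambda>n. snd ((s \<circ> r) n)) = (\<lambda>n. snd (s n)) \<circ> r" by auto
  have zz: "(P, F) \<in> c_completion \<tau>"
    "P \<noteq> {} \<longrightarrow> P \<subseteq> LI (\<lambda>n. fst (s n)) \<and> maximal_IP_in \<tau> P (LS (\<lambda>n. fst (s n)))"
    "F \<noteq> {} \<longrightarrow> F \<subseteq> LI (\<lambda>n. snd (s n)) \<and> maximal_IF_in \<tau> F (LS (\<lambda>n. snd (s n)))"
    using z zPF unfolding Lchr_def by simp_all
  have A: "P \<noteq> {} \<longrightarrow> P \<subseteq> LI (\<lambda>n. fst ((s \<circ> r) n)) \<and> maximal_IP_in \<tau> P (LS (\<lambda>n. fst ((s \<circ> r) n)))"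
    unfolding e1 using zz(2) maxIP_subseq[OF r] by blast
  have B: "F \<noteq> {} \<longrightarrow> F \<subseteq> LI (\<lambda>n. snd ((s \<circ> r) n)) \<and> maximal_IF_in \<tau> F (LS (\<lambda>n. snd ((s \<circ> r) n)))"
    unfolding e2 using zz(3) maxIF_subseq[OF r] by blast
  show "z \<in> Lchr \<tau> (s \<circ> r)" unfolding zPF Lchr_def using zz(1) A B by simp
qed

lemma chr_closed_Un:
  assumes c1: "chr_closed \<tau> C1" and c2: "chr_closed \<tau> C2"
  shows "chr_closed \<tau> (C1 \<union> C2)"
proof -
  have sub: "C1 \<union> C2 \<subseteq> c_completion \<tau>" using c1 c2 unfolding chr_closed_def by simp
  have L1: "Lchr \<tau> s \<subseteq> C1" if "\<forall>n. s n \<in> C1" for s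
    using c1 that unfolding chr_closed_def by simp
  have L2: "Lchr \<tau> s \<subseteq> C2" if "\<forall>n. s n \<in> C2" for s
    using c2 that unfolding chr_closed_def by simp
  have main: "Lchr \<tau> s \<subseteq> C1 \<union> C2" if s: "\<forall>n. s n \<in> C1 \<union> C2" for s
  proof (cases "infinite {n. s n \<in> C1}")
    case True
    obtain r :: "nat \<Rightarrow> nat" where r: "strict_mono r" "\<forall>n. r n \<in> {n. s n \<in> C1}"
      using infinite_enumerate[OF True] by (elim exE conjE)
    have "\<forall>n. (s \<circ> r) n \<in> C1" using r(2) by simp
    then have "Lchr \<tau> (s \<circ> r) \<subseteq> C1" by (rule L1)
    then show ?thesis using Lchr_subseq[OF r(1), of \<tau> s] by blast
  next
    case False
    then have "finite {n. s n \<in> C1}" by simp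
    then obtain N where N: "\<forall>n\<in>{n. s n \<in> C1}. n \<le> N"
      unfolding finite_nat_set_iff_bounded_le by (elim exE)
    define r where "r = (\<lambda>n::nat. n + Suc N)"
    have r: "strict_mono r" unfolding r_def strict_mono_def by simp
    have "\<forall>n. (s \<circ> r) n \<in> C2"
    proof
      fix n
      have "s (n + Suc N) \<notin> C1"
      proof
        assume "s (n + Suc N) \<in> C1"
        then have "n + Suc N \<le> N" using N by blast
        then show False by simp
      qed
      moreover have "s (n + Suc N) \<in> C1 \<union> C2" using s by simp
      ultimately show "(s \<circ> r) n \<in> C2" unfolding r_def by simp
    qed
    then have "Lchr \<tau> (s \<circ> r) \<subseteq> C2" by (rule L2)
    then show ?thesis using Lchr_subseq[OF r, of \<tau> s] by blast
  qed
  show ?thesis unfolding chr_closed_def using sub main by simp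
qed

lemma istopology_chr:
  "istopology (\<lambda>U. U \<subseteq> c_completion \<tau> \<and> chr_closed \<tau> (c_completion \<tau> - U))"
proof -
  have 1: "S \<inter> T \<subseteq> c_completion \<tau> \<and> chr_closed \<tau> (c_completion \<tau> - S \<inter> T)"
    if S: "S \<subseteq> c_completion \<tau> \<and> chr_closed \<tau> (c_completion \<tau> - S)"
    and T: "T \<subseteq> c_completion \<tau> \<and> chr_closed \<tau> (c_completion \<tau> - T)" for S T
  proof -
    have e: "c_completion \<tau> - S \<inter> T = (c_completion \<tau> - S) \<union> (c_completion \<tau> - T)" by blast
    have "chr_closed \<tau> ((c_completion \<tau> - S) \<union> (c_completion \<tau> - T))"
      using S T by (intro chr_closed_Un) simp_all
    then have "chr_closed \<tau> (c_completion \<tau> - S \<inter> T)" unfolding e .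
    moreover have "S \<inter> T \<subseteq> c_completion \<tau>" using S by blast
    ultimately show ?thesis by (rule conjI[rotated])
  qed
  have 2: "\<Union>K \<subseteq> c_completion \<tau> \<and> chr_closed \<tau> (c_completion \<tau> - \<Union>K)"
    if K: "\<forall>U\<in>K. U \<subseteq> c_completion \<tau> \<and> chr_closed \<tau> (c_completion \<tau> - U)" for K
  proof -
    have L: "Lchr \<tau> s \<subseteq> c_completion \<tau> - \<Union>K" if s: "\<forall>n. s n \<in> c_completion \<tau> - \<Union>K" for s
    proof
      fix z assume z: "z \<in> Lchr \<tau> s"
      have zc: "z \<in> c_completion \<tau>" using z unfolding Lchr_def by blast
      have "z \<notin> U" if U: "U \<in> K" for U
      proof -
        have cU: "chr_closed \<tau> (c_completion \<tau> - U)" using K U by blast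
        have "\<forall>n. s n \<in> c_completion \<tau> - U" using s U by blast
        then have "Lchr \<tau> s \<subseteq> c_completion \<tau> - U" using cU unfolding chr_closed_def by blast
        then show ?thesis using z by blast
      qed
      then show "z \<in> c_completion \<tau> - \<Union>K" using zc by blast
    qed
    have "c_completion \<tau> - \<Union>K \<subseteq> c_completion \<tau>" by blast
    then have "chr_closed \<tau> (c_completion \<tau> - \<Union>K)" unfolding chr_closed_def using L by blast
    moreover have "\<Union>K \<subseteq> c_completion \<tau>" using K by blast
    ultimately show ?thesis by (rule conjI[rotated])
  qed
  show ?thesis unfolding istopology_def
    apply (rule conjI)
     apply (intro allI impI)
     apply (rule 1; assumption)
    apply (intro allI impI)
    apply (rule 2; assumption)
    done
qed

lemma openin_sigma_chr:
  "openin (sigma_chr \<tau>) U \<longleftrightarrow> U \<subseteq> c_completion \<tau> \<and> chr_closed \<tau> (c_completion \<tau> - U)"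
  unfolding sigma_chr_def topology_inverse'[OF istopology_chr] by (rule refl)

lemma topspace_sigma_chr: "topspace (sigma_chr \<tau>) \<subseteq> c_completion \<tau>"
proof
  fix z assume "z \<in> topspace (sigma_chr \<tau>)"
  then obtain U where "openin (sigma_chr \<tau>) U" "z \<in> U" unfolding topspace_def by blast
  then show "z \<in> c_completion \<tau>" unfolding openin_sigma_chr by blast
qed

lemma LI_mem: "a \<in> LI A \<Longrightarrow> \<exists>n. a \<in> A n"
  unfolding LI_def by auto

lemma open_fut:
  "openin (sigma_chr \<tau>) {z \<in> c_completion \<tau>. a \<in> snd z}"
proof -
  let ?U = "{z \<in> c_completion \<tau>. a \<in> snd z}"
  have "\<And>s. \<forall>n. s n \<in> c_completion \<tau> - ?U \<Longrightarrow> Lchr \<tau> s \<subseteq> c_completion \<tau> - ?U"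
  proof -
    fix s :: "nat \<Rightarrow> 'a set \<times> 'a set" assume s: "\<forall>n. s n \<in> c_completion \<tau> - ?U"
    show "Lchr \<tau> s \<subseteq> c_completion \<tau> - ?U"
  proof
    fix z assume z: "z \<in> Lchr \<tau> s"
    obtain P F where zPF: "z = (P, F)" by (cases z)
    have zc: "(P, F) \<in> c_completion \<tau>"
      and zF: "F \<noteq> {} \<longrightarrow> F \<subseteq> LI (\<lambda>n. snd (s n))"
      using z zPF unfolding Lchr_def by simp_all
    have "a \<notin> F"
    proof
      assume a: "a \<in> F"
      then have "a \<in> LI (\<lambda>n. snd (s n))" using zF by blast
      from LI_mem[OF this] obtain n where an: "a \<in> snd (s n)" by (elim exE)
      have "s n \<in> c_completion \<tau> - ?U" using s by (rule spec)
      then show False using an by blast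
    qed
    then show "z \<in> c_completion \<tau> - ?U" using zc zPF by simp
  qed
  qed
  then have "chr_closed \<tau> (c_completion \<tau> - ?U)"
    unfolding chr_closed_def by (intro conjI allI impI Diff_subset)
  moreover have "?U \<subseteq> c_completion \<tau>" by (rule subsetI) (erule CollectE, erule conjE)
  ultimately show ?thesis unfolding openin_sigma_chr by (rule conjI[rotated])
qed

lemma open_past:
  "openin (sigma_chr \<tau>) {z \<in> c_completion \<tau>. a \<in> fst z}"
proof -
  let ?U = "{z \<in> c_completion \<tau>. a \<in> fst z}"
  have "\<And>s. \<forall>n. s n \<in> c_completion \<tau> - ?U \<Longrightarrow> Lchr \<tau> s \<subseteq> c_completion \<tau> - ?U"
  proof -
    fix s :: "nat \<Rightarrow> 'a set \<times> 'a set" assume s: "\<forall>n. s n \<in> c_completion \<tau> - ?U"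
    show "Lchr \<tau> s \<subseteq> c_completion \<tau> - ?U"
  proof
    fix z assume z: "z \<in> Lchr \<tau> s"
    obtain P F where zPF: "z = (P, F)" by (cases z)
    have zc: "(P, F) \<in> c_completion \<tau>"
      and zF: "P \<noteq> {} \<longrightarrow> P \<subseteq> LI (\<lambda>n. fst (s n))"
      using z zPF unfolding Lchr_def by simp_all
    have "a \<notin> P"
    proof
      assume a: "a \<in> P"
      then have "a \<in> LI (\<lambda>n. fst (s n))" using zF by blast
      from LI_mem[OF this] obtain n where an: "a \<in> fst (s n)" by (elim exE)
      have "s n \<in> c_completion \<tau> - ?U" using s by (rule spec)
      then show False using an by blast
    qed
    then show "z \<in> c_completion \<tau> - ?U" using zc zPF by simp
  qed
  qed
  then have "chr_closed \<tau> (c_completion \<tau> - ?U)"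
    unfolding chr_closed_def by (intro conjI allI impI Diff_subset)
  moreover have "?U \<subseteq> c_completion \<tau>" by (rule subsetI) (erule CollectE, erule conjE)
  ultimately show ?thesis unfolding openin_sigma_chr by (rule conjI[rotated])
qed

section \<open>Indecomposable future sets are generated by past chains\<close>

definition trans_chr :: "('a \<Rightarrow> 'a \<Rightarrow> ennreal) \<Rightarrow> bool" where
  "trans_chr \<tau> \<longleftrightarrow> (\<forall>x y z. chr \<tau> x y \<longrightarrow> chr \<tau> y z \<longrightarrow> chr \<tau> x z)"

lemma IfutS_idem:
  assumes "trans_chr \<tau>" "separable_lms \<tau>"
  shows "IfutS \<tau> (IfutS \<tau> A) = IfutS \<tau> A"
proof
  show "IfutS \<tau> (IfutS \<tau> A) \<subseteq> IfutS \<tau> A"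
  proof
    fix w assume "w \<in> IfutS \<tau> (IfutS \<tau> A)"
    then obtain u where u: "u \<in> IfutS \<tau> A" "chr \<tau> u w" unfolding IfutS_def Ifut_def by auto
    then obtain a where a: "a \<in> A" "chr \<tau> a u" unfolding IfutS_def Ifut_def by auto
    have "chr \<tau> a w" using assms(1) a(2) u(2) unfolding trans_chr_def by blast
    then show "w \<in> IfutS \<tau> A" using a(1) unfolding IfutS_def Ifut_def by auto
  qed
next
  show "IfutS \<tau> A \<subseteq> IfutS \<tau> (IfutS \<tau> A)"
  proof
    fix w assume "w \<in> IfutS \<tau> A"
    then obtain a where a: "a \<in> A" "chr \<tau> a w" unfolding IfutS_def Ifut_def by auto
    then obtain s where "chr \<tau> a s" "chr \<tau> s w" using assms(2) unfolding separable_lms_def by blast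
    then have "s \<in> IfutS \<tau> A" using a unfolding IfutS_def Ifut_def by auto
    then show "w \<in> IfutS \<tau> (IfutS \<tau> A)" using \<open>chr \<tau> s w\<close> unfolding IfutS_def Ifut_def by auto
  qed
qed

lemma future_set_IfutS:
  assumes "trans_chr \<tau>" "separable_lms \<tau>"
  shows "future_set \<tau> (IfutS \<tau> A)"
  unfolding future_set_def using IfutS_idem[OF assms] by simp

lemma IF_directed:
  assumes tr: "trans_chr \<tau>" and sep: "separable_lms \<tau>" and IF: "IF \<tau> F"
    and x: "x \<in> F" and y: "y \<in> F"
  shows "\<exists>z\<in>F. chr \<tau> z x \<and> chr \<tau> z y"
proof (rule ccontr)
  assume nz: "\<not> (\<exists>z\<in>F. chr \<tau> z x \<and> chr \<tau> z y)"
  have Fe: "F = IfutS \<tau> F" using IF unfolding IF_def future_set_def by blast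
  have T: "\<And>a b c. chr \<tau> a b \<Longrightarrow> chr \<tau> b c \<Longrightarrow> chr \<tau> a c"
    using tr unfolding trans_chr_def by blast
  have memF1: "\<exists>u\<in>F. chr \<tau> u w" if "w \<in> F" for w
  proof -
    have "w \<in> IfutS \<tau> F" using that Fe by simp
    then show ?thesis unfolding IfutS_def Ifut_def by simp
  qed
  have memF2: "w \<in> F" if "u \<in> F" "chr \<tau> u w" for u w
  proof -
    have "w \<in> IfutS \<tau> F" using that unfolding IfutS_def Ifut_def by blast
    then show ?thesis using Fe by simp
  qed
  define A where "A = IfutS \<tau> (F \<inter> Ipast \<tau> x)"
  define B where "B = IfutS \<tau> (F - A)"
  have memA: "w \<in> A \<longleftrightarrow> (\<exists>v. v \<in> F \<and> chr \<tau> v x \<and> chr \<tau> v w)" for w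
    unfolding A_def IfutS_def Ifut_def Ipast_def by auto
  have memB: "w \<in> B \<longleftrightarrow> (\<exists>v. v \<in> F \<and> v \<notin> A \<and> chr \<tau> v w)" for w
    unfolding B_def IfutS_def Ifut_def by auto
  have AF: "A \<subseteq> F"
  proof
    fix w assume "w \<in> A"
    then obtain v where "v \<in> F" "chr \<tau> v w" using memA by blast
    then show "w \<in> F" by (rule memF2)
  qed
  have BF: "B \<subseteq> F"
  proof
    fix w assume "w \<in> B"
    then obtain v where "v \<in> F" "chr \<tau> v w" using memB by blast
    then show "w \<in> F" by (rule memF2)
  qed
  have xA: "x \<in> A"
  proof -
    obtain u where "u \<in> F" "chr \<tau> u x" using memF1[OF x] by blast
    then show ?thesis using memA by blast
  qed
  have yA: "y \<notin> A"
  proof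
    assume "y \<in> A"
    then obtain v where "v \<in> F" "chr \<tau> v x" "chr \<tau> v y" using memA by blast
    then show False using nz by blast
  qed
  have xB: "x \<notin> B"
  proof
    assume "x \<in> B"
    then obtain u where u: "u \<in> F" "u \<notin> A" "chr \<tau> u x" using memB by blast
    obtain v where v: "v \<in> F" "chr \<tau> v u" using memF1[OF u(1)] by blast
    have "chr \<tau> v x" using T[OF v(2) u(3)] .
    then have "u \<in> A" using memA v by blast
    then show False using u by blast
  qed
  have FAB: "F = A \<union> B"
  proof
    show "F \<subseteq> A \<union> B"
    proof
      fix w assume w: "w \<in> F"
      show "w \<in> A \<union> B"
      proof (cases "w \<in> A")
        case False
        obtain u where u: "u \<in> F" "chr \<tau> u w" using memF1[OF w] by blast
        have "u \<notin> A"
        proof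
          assume "u \<in> A"
          then obtain v where v: "v \<in> F" "chr \<tau> v x" "chr \<tau> v u" using memA by blast
          have "chr \<tau> v w" using T[OF v(3) u(2)] .
          then have "w \<in> A" using memA v by blast
          then show False using False by blast
        qed
        then have "w \<in> B" using memB u by blast
        then show ?thesis by blast
      qed simp
    qed
  next
    show "A \<union> B \<subseteq> F" using AF BF by blast
  qed
  have fA: "future_set \<tau> A" unfolding A_def by (rule future_set_IfutS[OF tr sep])
  have fB: "future_set \<tau> B" unfolding B_def by (rule future_set_IfutS[OF tr sep])
  have pA: "A \<subset> F" using AF yA y by blast
  have pB: "B \<subset> F" using BF xB x by blast
  have "\<not> (\<exists>A B. future_set \<tau> A \<and> future_set \<tau> B \<and> A \<subset> F \<and> B \<subset> F \<and> F = A \<union> B)"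
    using IF unfolding IF_def by blast
  then show False using fA fB pA pB FAB by blast
qed

fun chainq :: "('a \<Rightarrow> 'a \<Rightarrow> ennreal) \<Rightarrow> 'a set \<Rightarrow> (nat \<Rightarrow> 'a) \<Rightarrow> nat \<Rightarrow> 'a" where
  "chainq \<tau> F e 0 = (SOME z. z \<in> F \<and> chr \<tau> z (e 0))"
| "chainq \<tau> F e (Suc n) = (SOME z. z \<in> F \<and> chr \<tau> z (chainq \<tau> F e n) \<and> chr \<tau> z (e (Suc n)))"

lemma IF_chain:
  assumes tr: "trans_chr \<tau>" and sep: "separable_lms \<tau>" and IF: "IF \<tau> F"
  shows "\<exists>q. past_chain \<tau> q \<and> IfutS \<tau> (range q) = F"
proof -
  obtain S where S: "countable S" "\<forall>x y. chr \<tau> x y \<longrightarrow> (\<exists>s\<in>S. chr \<tau> x s \<and> chr \<tau> s y)"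
    using sep unfolding separable_lms_def by blast
  have Fe: "F = IfutS \<tau> F" using IF unfolding IF_def future_set_def by blast
  have T: "\<And>a b c. chr \<tau> a b \<Longrightarrow> chr \<tau> b c \<Longrightarrow> chr \<tau> a c"
    using tr unfolding trans_chr_def by blast
  have memF1: "\<exists>u\<in>F. chr \<tau> u w" if "w \<in> F" for w
  proof -
    have "w \<in> IfutS \<tau> F" using that Fe by simp
    then show ?thesis unfolding IfutS_def Ifut_def by simp
  qed
  have memF2: "w \<in> F" if "u \<in> F" "chr \<tau> u w" for u w
  proof -
    have "w \<in> IfutS \<tau> F" using that unfolding IfutS_def Ifut_def by blast
    then show ?thesis using Fe by simp
  qed
  have dense: "\<exists>s\<in>F \<inter> S. chr \<tau> s w" if w: "w \<in> F" for w
  proof -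
    obtain u where u: "u \<in> F" "chr \<tau> u w" using memF1[OF w] by blast
    obtain s where s: "s \<in> S" "chr \<tau> u s" "chr \<tau> s w" using S(2) u(2) by blast
    have "s \<in> F" using memF2[OF u(1) s(2)] .
    then show ?thesis using s by blast
  qed
  obtain w0 where "w0 \<in> F" using IF unfolding IF_def by blast
  then have ne: "F \<inter> S \<noteq> {}" using dense by blast
  have cnt: "countable (F \<inter> S)" using S(1) by simp
  define e where "e = from_nat_into (F \<inter> S)"
  have re: "range e = F \<inter> S" unfolding e_def using range_from_nat_into[OF ne cnt] .
  define q where "q = chainq \<tau> F e"
  have eF: "e n \<in> F" for n using re by blast
  have q: "q n \<in> F \<and> chr \<tau> (q n) (e n) \<and> (\<forall>m. n = Suc m \<longrightarrow> chr \<tau> (q n) (q m))" for n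
  proof (induction n)
    case 0
    have "\<exists>z. z \<in> F \<and> chr \<tau> z (e 0)" using memF1[OF eF[of 0]] by blast
    then have "q 0 \<in> F \<and> chr \<tau> (q 0) (e 0)" unfolding q_def chainq.simps by (rule someI_ex)
    then show ?case by simp
  next
    case (Suc n)
    have "\<exists>z\<in>F. chr \<tau> z (q n) \<and> chr \<tau> z (e (Suc n))"
      using IF_directed[OF tr sep IF] Suc.IH eF[of "Suc n"] by blast
    then have "\<exists>z. z \<in> F \<and> chr \<tau> z (q n) \<and> chr \<tau> z (e (Suc n))" by blast
    then have "q (Suc n) \<in> F \<and> chr \<tau> (q (Suc n)) (q n) \<and> chr \<tau> (q (Suc n)) (e (Suc n))"
      unfolding q_def chainq.simps by (rule someI_ex)
    then show ?case by simp
  qed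
  have pc: "past_chain \<tau> q" unfolding past_chain_def using q by blast
  have "IfutS \<tau> (range q) \<subseteq> F"
  proof
    fix w assume "w \<in> IfutS \<tau> (range q)"
    then obtain n where "chr \<tau> (q n) w" unfolding IfutS_def Ifut_def by blast
    then show "w \<in> F" using memF2 q by blast
  qed
  moreover have "F \<subseteq> IfutS \<tau> (range q)"
  proof
    fix w assume "w \<in> F"
    then obtain s where s: "s \<in> F \<inter> S" "chr \<tau> s w" using dense by blast
    then have "s \<in> range e" using re by simp
    then obtain k where k: "s = e k" by blast
    have "chr \<tau> (q k) (e k)" using q by blast
    then have "chr \<tau> (q k) w" using T s(2) k by blast
    then show "w \<in> IfutS \<tau> (range q)" unfolding IfutS_def Ifut_def by blast
  qed
  ultimately show ?thesis using pc by blast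
qed

section \<open>Duality\<close>

definition dual :: "('a \<Rightarrow> 'a \<Rightarrow> ennreal) \<Rightarrow> 'a \<Rightarrow> 'a \<Rightarrow> ennreal" where
  "dual \<tau> x y = \<tau> y x"

lemma chr_dual: "chr (dual \<tau>) x y = chr \<tau> y x"
  unfolding chr_def dual_def by simp

lemma IfutS_dual: "IfutS (dual \<tau>) = IpastS \<tau>"
  unfolding IfutS_def IpastS_def Ifut_def Ipast_def chr_dual by simp

lemma IF_dual: "IF (dual \<tau>) = IP \<tau>"
  unfolding IF_def IP_def future_set_def past_set_def IfutS_dual by simp

lemma past_chain_dual: "past_chain (dual \<tau>) = future_chain \<tau>"
  unfolding past_chain_def future_chain_def chr_dual by simp

lemma trans_dual: "trans_chr \<tau> \<Longrightarrow> trans_chr (dual \<tau>)"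
  unfolding trans_chr_def chr_dual by blast

lemma sep_dual: "separable_lms \<tau> \<Longrightarrow> separable_lms (dual \<tau>)"
  unfolding separable_lms_def chr_dual by blast

lemma IP_chain:
  assumes tr: "trans_chr \<tau>" and sep: "separable_lms \<tau>" and IP: "IP \<tau> P"
  shows "\<exists>p. future_chain \<tau> p \<and> IpastS \<tau> (range p) = P"
  using IF_chain[OF trans_dual[OF tr] sep_dual[OF sep]] IP
  unfolding IF_dual past_chain_dual IfutS_dual by blast

section \<open>The extended time separation\<close>

definition rev_tri :: "('a \<Rightarrow> 'a \<Rightarrow> ennreal) \<Rightarrow> bool" where
  "rev_tri \<tau> \<longleftrightarrow> (\<forall>x y z. \<tau> x y > 0 \<and> \<tau> y z > 0 \<longrightarrow> \<tau> x z \<ge> \<tau> x y + \<tau> y z)"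

lemma rev_tri_trans: "rev_tri \<tau> \<Longrightarrow> trans_chr \<tau>"
  unfolding rev_tri_def trans_chr_def chr_def
  by (metis add_pos_nonneg order_less_le_trans zero_le)

lemma rev_tri_ge1: "rev_tri \<tau> \<Longrightarrow> chr \<tau> x y \<Longrightarrow> chr \<tau> y z \<Longrightarrow> \<tau> y z \<le> \<tau> x z"
  unfolding rev_tri_def chr_def by (metis add_increasing zero_le order_trans order_refl)

lemma rev_tri_ge2: "rev_tri \<tau> \<Longrightarrow> chr \<tau> x y \<Longrightarrow> chr \<tau> y z \<Longrightarrow> \<tau> x y \<le> \<tau> x z"
  unfolding rev_tri_def chr_def by (metis add_increasing2 zero_le order_trans order_refl)

lemma tau_bar_SUP:
  assumes rt: "rev_tri \<tau>" and sep: "separable_lms \<tau>" and F: "IF \<tau> F" and P: "IP \<tau> P'"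
  shows "\<exists>q p. past_chain \<tau> q \<and> IfutS \<tau> (range q) = F \<and> future_chain \<tau> p \<and>
     IpastS \<tau> (range p) = P' \<and> tau_bar \<tau> (P, F) (P', F') = (SUP n. \<tau> (q n) (p n))"
proof -
  have tr: "trans_chr \<tau>" using rev_tri_trans[OF rt] .
  define q where "q = (SOME q. past_chain \<tau> q \<and> IfutS \<tau> (range q) = F)"
  define p where "p = (SOME p. future_chain \<tau> p \<and> IpastS \<tau> (range p) = P')"
  have q: "past_chain \<tau> q \<and> IfutS \<tau> (range q) = F"
    unfolding q_def using IF_chain[OF tr sep F] by (rule someI_ex)
  have p: "future_chain \<tau> p \<and> IpastS \<tau> (range p) = P'"
    unfolding p_def using IP_chain[OF tr sep P] by (rule someI_ex)
  have Fne: "F \<noteq> {}" using F unfolding IF_def by blast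
  have Pne: "P' \<noteq> {}" using P unfolding IP_def by blast
  have inc: "incseq (\<lambda>n. \<tau> (q n) (p n))"
  proof (rule incseq_SucI)
    fix n
    show "\<tau> (q n) (p n) \<le> \<tau> (q (Suc n)) (p (Suc n))"
    proof (cases "\<tau> (q n) (p n) = 0")
      case False
      then have c: "chr \<tau> (q n) (p n)" unfolding chr_def by (simp add: zero_less_iff_neq_zero)
      have c1: "chr \<tau> (q (Suc n)) (q n)" using q unfolding past_chain_def by blast
      have c2: "chr \<tau> (p n) (p (Suc n))" using p unfolding future_chain_def by blast
      have c3: "chr \<tau> (q (Suc n)) (p n)" using tr c c1 unfolding trans_chr_def by blast
      have "\<tau> (q n) (p n) \<le> \<tau> (q (Suc n)) (p n)" using rev_tri_ge1[OF rt c1 c] .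
      also have "\<dots> \<le> \<tau> (q (Suc n)) (p (Suc n))" using rev_tri_ge2[OF rt c3 c2] .
      finally show ?thesis .
    qed simp
  qed
  have "tau_bar \<tau> (P, F) (P', F') = lim (\<lambda>n. \<tau> (q n) (p n))"
    unfolding tau_bar_def Let_def q_def p_def using Fne Pne by simp
  also have "\<dots> = (SUP n. \<tau> (q n) (p n))"
    using LIMSEQ_SUP[OF inc] by (rule limI)
  finally show ?thesis using p q by blast
qed

lemma chain_tail_fut:
  assumes tr: "trans_chr \<tau>" and pc: "past_chain \<tau> q" and m: "chr \<tau> (q m) a" and k: "m \<le> k"
  shows "chr \<tau> (q k) a"
  using k
proof (induction k rule: dec_induct)
  case base then show ?case using m .
next
  case (step n)
  then show ?case using pc tr unfolding past_chain_def trans_chr_def by blast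
qed

lemma chain_tail_past:
  assumes tr: "trans_chr \<tau>" and pc: "future_chain \<tau> p" and m: "chr \<tau> b (p m)" and k: "m \<le> k"
  shows "chr \<tau> b (p k)"
  using k
proof (induction k rule: dec_induct)
  case base then show ?case using m .
next
  case (step n)
  then show ?case using pc tr unfolding future_chain_def trans_chr_def by blast
qed

lemma tau_bar_lower:
  assumes rt: "rev_tri \<tau>" and sep: "separable_lms \<tau>" and F: "IF \<tau> F" and P: "IP \<tau> P'"
    and a: "a \<in> F" and b: "b \<in> P'" and ab: "chr \<tau> a b"
  shows "\<tau> a b \<le> tau_bar \<tau> (P, F) (P', F')"
proof -
  have tr: "trans_chr \<tau>" using rev_tri_trans[OF rt] .
  obtain q p where q: "past_chain \<tau> q" "IfutS \<tau> (range q) = F"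
    and p: "future_chain \<tau> p" "IpastS \<tau> (range p) = P'"
    and eq: "tau_bar \<tau> (P, F) (P', F') = (SUP n. \<tau> (q n) (p n))"
    using tau_bar_SUP[OF rt sep F P] by blast
  obtain m where m: "chr \<tau> (q m) a" using a q(2) unfolding IfutS_def Ifut_def by blast
  obtain m' where m': "chr \<tau> b (p m')" using b p(2) unfolding IpastS_def Ipast_def by blast
  define M where "M = max m m'"
  have c1: "chr \<tau> (q M) a" using chain_tail_fut[OF tr q(1) m] unfolding M_def by simp
  have c2: "chr \<tau> b (p M)" using chain_tail_past[OF tr p(1) m'] unfolding M_def by simp
  have c3: "chr \<tau> a (p M)" using tr ab c2 unfolding trans_chr_def by blast
  have "\<tau> a b \<le> \<tau> a (p M)" using rev_tri_ge2[OF rt ab c2] .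
  also have "\<dots> \<le> \<tau> (q M) (p M)" using rev_tri_ge1[OF rt c1 c3] .
  also have "\<dots> \<le> (SUP n. \<tau> (q n) (p n))" by (rule SUP_upper) simp
  finally show ?thesis using eq by simp
qed

lemma S_rel_IF: "S_rel \<tau> P F \<Longrightarrow> F \<noteq> {} \<Longrightarrow> IF \<tau> F"
  unfolding S_rel_def S_rel_ne_def by blast

lemma S_rel_IP: "S_rel \<tau> P F \<Longrightarrow> P \<noteq> {} \<Longrightarrow> IP \<tau> P"
  unfolding S_rel_def S_rel_ne_def by blast

theorem mainTheorem18:
  fixes \<sigma> :: "'a topology" and \<tau> :: "'a \<Rightarrow> 'a \<Rightarrow> ennreal"
  assumes "lorentzian_metric_space \<sigma> \<tau>"
    and "separable_lms \<tau>"
    and "chronologically_dense \<sigma> \<tau>"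
    and "S_property \<tau>"
  shows "lsc_on (prod_topology (sigma_chr \<tau>) (sigma_chr \<tau>)) (\<lambda>(x, y). tau_bar \<tau> x y)"
  unfolding lsc_on_def
proof
  fix t :: ennreal
  have rt: "rev_tri \<tau>" using assms(1) unfolding lorentzian_metric_space_def rev_tri_def by blast
  have tr: "trans_chr \<tau>" using rev_tri_trans[OF rt] .
  have sep: "separable_lms \<tau>" using assms(2) .
  let ?S = "{z \<in> topspace (prod_topology (sigma_chr \<tau>) (sigma_chr \<tau>)).
              t < (case z of (x, y) \<Rightarrow> tau_bar \<tau> x y)}"
  show "openin (prod_topology (sigma_chr \<tau>) (sigma_chr \<tau>)) ?S"
    unfolding openin_prod_topology_alt
  proof (intro allI impI)
    fix x y assume xy: "(x, y) \<in> ?S"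
    obtain P F where x: "x = (P, F)" by (cases x)
    obtain P' F' where y: "y = (P', F')" by (cases y)
    have xX: "x \<in> c_completion \<tau>" and yX: "y \<in> c_completion \<tau>"
      using xy topspace_sigma_chr by auto
    have lt: "t < tau_bar \<tau> (P, F) (P', F')" using xy x y by simp
    have Fne: "F \<noteq> {}" and Pne: "P' \<noteq> {}"
      using lt unfolding tau_bar_def Let_def by (auto split: if_splits)
    have IFF: "IF \<tau> F" using S_rel_IF xX x Fne unfolding c_completion_def by blast
    have IPP: "IP \<tau> P'" using S_rel_IP yX y Pne unfolding c_completion_def by blast
    obtain q p where q: "past_chain \<tau> q" "IfutS \<tau> (range q) = F"
      and p: "future_chain \<tau> p" "IpastS \<tau> (range p) = P'"
      and eq: "tau_bar \<tau> (P, F) (P', F') = (SUP n. \<tau> (q n) (p n))"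
      using tau_bar_SUP[OF rt sep IFF IPP] by blast
    obtain n where n: "t < \<tau> (q n) (p n)" using lt eq by (auto simp: less_SUP_iff)
    define a where "a = q n"
    define b where "b = p n"
    have aF: "a \<in> F" using q unfolding a_def past_chain_def IfutS_def Ifut_def by blast
    have bP: "b \<in> P'" using p unfolding b_def future_chain_def IpastS_def Ipast_def by blast
    have tab: "t < \<tau> a b" using n unfolding a_def b_def .
    then have ab: "chr \<tau> a b" unfolding chr_def using order_le_less_trans zero_le by blast
    define U where "U = {z \<in> c_completion \<tau>. a \<in> snd z}"
    define V where "V = {z \<in> c_completion \<tau>. b \<in> fst z}"
    have oU: "openin (sigma_chr \<tau>) U" unfolding U_def by (rule open_fut)
    have oV: "openin (sigma_chr \<tau>) V" unfolding V_def by (rule open_past)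
    have "U \<times> V \<subseteq> ?S"
    proof
      fix z assume z: "z \<in> U \<times> V"
      obtain P1 F1 P2 F2 where zz: "z = ((P1, F1), (P2, F2))" by (metis prod.exhaust)
      have m1: "(P1, F1) \<in> c_completion \<tau>" "a \<in> F1" using z zz unfolding U_def by auto
      have m2: "(P2, F2) \<in> c_completion \<tau>" "b \<in> P2" using z zz unfolding V_def by auto
      have I1: "IF \<tau> F1" using S_rel_IF m1 unfolding c_completion_def by blast
      have I2: "IP \<tau> P2" using S_rel_IP m2 unfolding c_completion_def by blast
      have "t < tau_bar \<tau> (P1, F1) (P2, F2)"
        using order_less_le_trans[OF tab tau_bar_lower[OF rt sep I1 I2 m1(2) m2(2) ab]] .
      moreover have "z \<in> topspace (prod_topology (sigma_chr \<tau>) (sigma_chr \<tau>))"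
        using z oU oV openin_subset by fastforce
      ultimately show "z \<in> ?S" using zz by simp
    qed
    moreover have "x \<in> U" using xX aF x unfolding U_def by simp
    moreover have "y \<in> V" using yX bP y unfolding V_def by simp
    ultimately show "\<exists>U V. openin (sigma_chr \<tau>) U \<and> openin (sigma_chr \<tau>) V \<and>
                 x \<in> U \<and> y \<in> V \<and> U \<times> V \<subseteq> ?S" using oU oV by blast
  qed
qed

end
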